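(* Consider the one-parameter family of maps $f(x,r)=x^2\exp(r-x)+k$ with bifurcation parameter $r\in\mathbb{R}$, where $k\in[0,3-2\sqrt2)$ is fixed. Then the family undergoes a fold bifurcation. More precisely: for $k=0$, the family undergoes a fold bifurcation at the fixed point $x_0=1$ for the bifurcation value $r_0=1$; for fixed $0<k<3-2\sqrt2$, there are two bifurcation values \[ r_{0,1}=x_{0,1}-\ln\big((2-x_{0,1})x_{0,1}\big),\qquad r_{0,2}=x_{0,2}-\ln\big((2-x_{0,2})x_{0,2}\big), \] where \[ x_{0,1}=\frac{k+1-\sqrt{k^2-6k+1}}{2},\qquad x_{0,2}=\frac{k+1+\sqrt{k^2-6k+1}}{2}, \] and for $i=1,2$ the family undergoes a fold bifurcation at the fixed point $x_{0,i}$ of $f(\cdot,r_{0,i})$ for the bifurcation value $r=r_{0,i}$.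
   Context: For a smooth one-parameter family $x\mapsto f(x,a)$ of maps of $\mathbb{R}$ with a fixed point $x_0$ at $a=a_0$, one says that a fold (saddle-node, tangent) bifurcation occurs at $x_0$ for $a=a_0$ if $\frac{\partial f}{\partial x}(x_0,a_0)=1$ and the nondegeneracy conditions (A.1) $\frac{\partial^2 f}{\partial x^2}(x_0,a_0)\neq0$ and (A.2) $\frac{\partial f}{\partial a}(x_0,a_0)\neq 0$ hold; then smooth invertible changes of coordinates and parameter transform the system into $\eta\mapsto\beta+\eta\pm\eta^2+O(\eta^3)$. *)

theory Defs
  imports "HOL-Analysis.Analysis"
begin

text \<open>The second
  partial derivative is expressed via a function fx giving the first partial
  derivative in x near x0 (for the parameter a0), differentiable at x0.\<close>

definition fold_bifurcation :: "(real \<Rightarrow> real \<Rightarrow> real) \<Rightarrow> real \<Rightarrow> real \<Rightarrow> bool" where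
  "fold_bifurcation f x0 a0 \<longleftrightarrow>
     f x0 a0 = x0 \<and>
     (\<exists>fx fxx fa. (\<forall>\<^sub>F x in nhds x0. ((\<lambda>y. f y a0) has_real_derivative fx x) (at x)) \<and>
        fx x0 = 1 \<and>
        (fx has_real_derivative fxx) (at x0) \<and> fxx \<noteq> 0 \<and>
        ((\<lambda>a. f x0 a) has_real_derivative fa) (at a0) \<and> fa \<noteq> 0)"

end

theory Submission
  imports Defs
begin

lemma fold_gen:
  fixes k x0 r0 :: real
  assumes x0: "0 < x0" "x0 < 2"
    and r0: "r0 = x0 - ln ((2 - x0) * x0)"
    and q: "x0\<^sup>2 - (k+1) * x0 + 2 * k = 0"
    and nz: "x0\<^sup>2 - 4 * x0 + 2 \<noteq> 0"
  shows "fold_bifurcation (\<lambda>x r. x\<^sup>2 * exp (r - x) + k) x0 r0"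
proof -
  have pos: "(2 - x0) * x0 > 0" using x0 by simp
  have E: "exp (r0 - x0) = 1 / ((2 - x0) * x0)"
    using pos by (simp add: r0 exp_minus exp_ln field_simps)
  have fixpt: "x0\<^sup>2 * exp (r0 - x0) + k = x0"
  proof -
    have "x0\<^sup>2 * exp (r0 - x0) + k = (x0\<^sup>2 + k * ((2 - x0) * x0)) / ((2 - x0) * x0)"
    proof -
      have "x0\<^sup>2 * exp (r0 - x0) = x0\<^sup>2 / ((2 - x0) * x0)" by (simp add: E)
      thus ?thesis using pos x0 by (simp add: add_divide_distrib field_simps)
    qed
    also have "x0\<^sup>2 + k * ((2 - x0) * x0) = x0 * ((2 - x0) * x0)"
    proof -
      have "x0 * (x0\<^sup>2 - (k+1) * x0 + 2 * k) = 0" using q by simp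
      thus ?thesis by (simp add: algebra_simps power2_eq_square power3_eq_cube)
    qed
    finally show ?thesis using pos x0 by simp
  qed
  define fx where "fx = (\<lambda>x. (2 * x - x\<^sup>2) * exp (r0 - x))"
  have d1: "((\<lambda>y. y\<^sup>2 * exp (r0 - y) + k) has_real_derivative fx x) (at x)" for x
    unfolding fx_def
    by (auto intro!: derivative_eq_intros simp: algebra_simps power2_eq_square)
  have fx1: "fx x0 = 1" unfolding fx_def E using pos x0
    by (simp add: field_simps power2_eq_square)
  have d2: "(fx has_real_derivative ((2 - 4 * x0 + x0\<^sup>2) * exp (r0 - x0))) (at x0)"
    unfolding fx_def
    by (auto intro!: derivative_eq_intros simp: algebra_simps power2_eq_square)
  have n2: "(2 - 4 * x0 + x0\<^sup>2) * exp (r0 - x0) \<noteq> 0"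
  proof -
    have "2 - 4 * x0 + x0\<^sup>2 \<noteq> 0" using nz by (simp add: algebra_simps)
    thus ?thesis by simp
  qed
  have d3: "((\<lambda>a. x0\<^sup>2 * exp (a - x0) + k) has_real_derivative (x0\<^sup>2 * exp (r0 - x0))) (at r0)"
    by (auto intro!: derivative_eq_intros)
  have n3: "x0\<^sup>2 * exp (r0 - x0) \<noteq> 0" using x0 by simp
  show ?thesis unfolding fold_bifurcation_def
    using fixpt d1 fx1 d2 n2 d3 n3 by (intro conjI exI[of _ fx] exI[of _ "(2 - 4 * x0 + x0\<^sup>2) * exp (r0 - x0)"] exI[of _ "x0\<^sup>2 * exp (r0 - x0)"]) auto
qed

theorem theorem2p3:
  fixes k :: real
  assumes "0 \<le> k" and "k < 3 - 2 * sqrt 2"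
  defines "f \<equiv> (\<lambda>x r. x\<^sup>2 * exp (r - x) + k)"
  shows "(k = 0 \<longrightarrow> fold_bifurcation f 1 1) \<and>
         (0 < k \<longrightarrow>
            (let x01 = (k + 1 - sqrt (k\<^sup>2 - 6 * k + 1)) / 2;
                 x02 = (k + 1 + sqrt (k\<^sup>2 - 6 * k + 1)) / 2;
                 r01 = x01 - ln ((2 - x01) * x01);
                 r02 = x02 - ln ((2 - x02) * x02)
             in fold_bifurcation f x01 r01 \<and> fold_bifurcation f x02 r02))"
proof (intro conjI impI)
  assume "k = 0"
  thus "fold_bifurcation f 1 1" unfolding f_def
    using fold_gen[of 1 1 0] by simp
next
  assume kp: "0 < k"
  define s where "s = sqrt (k\<^sup>2 - 6 * k + 1)"
  have s2: "sqrt 2 * sqrt 2 = 2" by simp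
  have "(3 - k)\<^sup>2 > 8"
  proof -
    have "3 - k > 2 * sqrt 2" using assms(2) by simp
    moreover have "2 * sqrt 2 > 0" by simp
    ultimately have "(3 - k)\<^sup>2 > (2 * sqrt 2)\<^sup>2"
      by (meson less_trans pos2 power_strict_mono order.strict_implies_order)
    thus ?thesis by (simp add: power_mult_distrib)
  qed
  hence disc: "k\<^sup>2 - 6 * k + 1 > 0" by (simp add: power2_eq_square algebra_simps)
  have ss: "s\<^sup>2 = k\<^sup>2 - 6 * k + 1" using disc by (simp add: s_def)
  have sp: "s > 0" using disc by (simp add: s_def)
  have slt: "s < 1 - k"
  proof -
    have "s\<^sup>2 < (1 - k)\<^sup>2" using ss kp by (simp add: power2_eq_square algebra_simps)
    moreover have "1 - k > 0" using assms(2) s2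
      by (smt (verit) real_sqrt_ge_one) 
    ultimately show ?thesis using sp by (smt (verit) power_mono)
  qed
  have ne: "s \<noteq> 3 - k" using slt kp by simp
  have main: "fold_bifurcation f x (x - ln ((2 - x) * x))"
    if x: "x = (k + 1 + e * s) / 2" and e: "e = 1 \<or> e = -1" for x e
  proof -
    have e2: "e * e = 1" using e by auto
    have q: "x\<^sup>2 - (k+1) * x + 2 * k = 0"
    proof -
      have es: "(e * s)\<^sup>2 = k\<^sup>2 - 6 * k + 1" proof -
        have "(e * s)\<^sup>2 = e\<^sup>2 * s\<^sup>2" by (rule power_mult_distrib)
        moreover have "e\<^sup>2 = 1" using e by auto
        ultimately show ?thesis using ss by simp
      qed
      show ?thesis using es unfolding x by (simp add: power2_eq_square field_simps)
    qed
    have xp: "0 < x" using e sp slt kp x by auto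
    have x2: "x < 2" using e sp slt kp x by auto
    have nz: "x\<^sup>2 - 4 * x + 2 \<noteq> 0"
    proof
      assume h: "x\<^sup>2 - 4 * x + 2 = 0"
      hence "(k - 3) * x + 2 - 2 * k = 0" using q by (simp add: algebra_simps)
      hence "(k-3) * (k + 1 + e * s) + 4 - 4 * k = 0" unfolding x by (simp add: field_simps)
      hence "(k-3) * e * s = -(k\<^sup>2 - 6*k + 1)" by (simp add: algebra_simps power2_eq_square)
      hence "(k-3) * e * s = - (s * s)" using ss by (simp add: power2_eq_square)
      hence "(k-3) * e = - s" using sp by (metis mult.commute mult_minus_left mult_right_cancel less_irrefl)
      thus False using e ne kp sp slt by auto
    qed
    show ?thesis unfolding f_def by (rule fold_gen[OF xp x2 refl q nz])
  qed
  show "let x01 = (k + 1 - sqrt (k\<^sup>2 - 6 * k + 1)) / 2;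
                 x02 = (k + 1 + sqrt (k\<^sup>2 - 6 * k + 1)) / 2;
                 r01 = x01 - ln ((2 - x01) * x01);
                 r02 = x02 - ln ((2 - x02) * x02)
             in fold_bifurcation f x01 r01 \<and> fold_bifurcation f x02 r02"
    unfolding Let_def s_def[symmetric]
    using main[of "(k + 1 + s) / 2" 1] main[of "(k + 1 - s) / 2" "-1"] by simp
qed

end
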